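(* Let $G,H$ be profinite groups and $\varphi:G\to H$ an abstract group isomorphism (not assumed continuous). If $P$ is a $p$-Sylow subgroup of $G$ for a prime $p$, then $\varphi(P)$ is a $p$-Sylow subgroup of $H$.
   Context: A $p$-Sylow subgroup of a profinite group is a maximal closed pro-$p$ subgroup. *)

theory Defs
  imports "HOL-Algebra.Algebra" "HOL-Analysis.Analysis"
begin

definition topological_group :: "('a, 'b) monoid_scheme \<Rightarrow> 'a topology \<Rightarrow> bool" where
  "topological_group G T \<longleftrightarrow> group G \<and> topspace T = carrier G \<and>
     continuous_map (prod_topology T T) T (\<lambda>(x, y). x \<otimes>\<^bsub>G\<^esub> y) \<and>
     continuous_map T T (\<lambda>x. inv\<^bsub>G\<^esub> x)"

definition profinite_group :: "('a, 'b) monoid_scheme \<Rightarrow> 'a topology \<Rightarrow> bool" where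
  "profinite_group G T \<longleftrightarrow> topological_group G T \<and> compact_space T \<and> Hausdorff_space T \<and>
     (\<forall>x \<in> topspace T. connected_component_of_set T x = {x})"

definition pro_p_group :: "nat \<Rightarrow> ('a, 'b) monoid_scheme \<Rightarrow> 'a topology \<Rightarrow> bool" where
  "pro_p_group p G T \<longleftrightarrow> profinite_group G T \<and>
     (\<forall>N. N \<lhd> G \<and> openin T N \<longrightarrow> finite (carrier (G Mod N)) \<and> (\<exists>k. card (carrier (G Mod N)) = p ^ k))"

definition closed_pro_p_subgroup :: "nat \<Rightarrow> ('a, 'b) monoid_scheme \<Rightarrow> 'a topology \<Rightarrow> 'a set \<Rightarrow> bool" where
  "closed_pro_p_subgroup p G T P \<longleftrightarrow> subgroup P G \<and> closedin T P \<and>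
     pro_p_group p (G\<lparr>carrier := P\<rparr>) (subtopology T P)"

definition sylow_subgroup :: "nat \<Rightarrow> ('a, 'b) monoid_scheme \<Rightarrow> 'a topology \<Rightarrow> 'a set \<Rightarrow> bool" where
  "sylow_subgroup p G T P \<longleftrightarrow> closed_pro_p_subgroup p G T P \<and>
     (\<forall>Q. closed_pro_p_subgroup p G T Q \<and> P \<subseteq> Q \<longrightarrow> Q = P)"

end

theory Submission
  imports Defs
begin


locale tgrp = group G for G (structure) +
  fixes T :: "'a topology"
  assumes tg: "topological_group G T"
begin

lemma top [simp]: "topspace T = carrier G"
  using tg by (simp add: topological_group_def)

lemma cmult: "continuous_map (prod_topology T T) T (\<lambda>(x, y). x \<otimes> y)"
  using tg by (simp add: topological_group_def)

lemma cinv: "continuous_map T T (\<lambda>x. inv x)"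
  using tg by (simp add: topological_group_def)

lemma cmult_fun:
  assumes "continuous_map Z T f" "continuous_map Z T g"
  shows "continuous_map Z T (\<lambda>x. f x \<otimes> g x)"
proof -
  have "continuous_map Z T ((\<lambda>(x, y). x \<otimes> y) \<circ> (\<lambda>x. (f x, g x)))"
    by (rule continuous_map_compose[OF continuous_map_pairedI[OF assms] cmult])
  then show ?thesis by (simp add: o_def)
qed

lemma cinv_fun:
  assumes "continuous_map Z T f"
  shows "continuous_map Z T (\<lambda>x. inv (f x))"
  using continuous_map_compose[OF assms cinv] by (simp add: o_def)

lemma cconst: "a \<in> carrier G \<Longrightarrow> continuous_map Z T (\<lambda>x. a)"
  by simp

lemma cpow: "continuous_map T T (\<lambda>x. x [^] (n::nat))"
proof (induction n)
  case 0
  then show ?case by simp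
next
  case (Suc n)
  have "continuous_map T T (\<lambda>x. x [^] n \<otimes> x)"
    by (rule cmult_fun[OF Suc continuous_map_id[unfolded id_def]])
  then show ?case by simp
qed

lemma cancel1 [simp]: "g \<in> carrier G \<Longrightarrow> y \<in> carrier G \<Longrightarrow> inv g \<otimes> (g \<otimes> y) = y"
  by (simp add: m_assoc[symmetric])

lemma cancel2 [simp]: "g \<in> carrier G \<Longrightarrow> y \<in> carrier G \<Longrightarrow> g \<otimes> (inv g \<otimes> y) = y"
  by (simp add: m_assoc[symmetric])

lemma subgroup_pow_closed: "subgroup N G \<Longrightarrow> h \<in> N \<Longrightarrow> h [^] (n::nat) \<in> N"
  by (induction n) (auto simp: subgroup.one_closed subgroup.m_closed)

lemma rcos_preimage:
  assumes "subgroup N G" "a \<in> carrier G"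
  shows "N #> a = {x \<in> topspace T. x \<otimes> inv a \<in> N}"
proof
  show "N #> a \<subseteq> {x \<in> topspace T. x \<otimes> inv a \<in> N}"
    using assms by (auto simp: r_coset_def m_assoc subgroup.mem_carrier)
  show "{x \<in> topspace T. x \<otimes> inv a \<in> N} \<subseteq> N #> a"
  proof clarify
    fix x assume x: "x \<in> topspace T" "x \<otimes> inv a \<in> N"
    then have "x = (x \<otimes> inv a) \<otimes> a" using assms by (simp add: m_assoc)
    then show "x \<in> N #> a" using x(2) unfolding r_coset_def by blast
  qed
qed

lemma open_rcos:
  assumes "openin T N" "subgroup N G" "a \<in> carrier G"
  shows "openin T (N #> a)"
proof -
  have "continuous_map T T (\<lambda>x. x \<otimes> inv a)"
    using cmult_fun[OF continuous_map_id[unfolded id_def] cconst[of "inv a"]] assms by simp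
  then show ?thesis unfolding rcos_preimage[OF assms(2,3)]
    using openin_continuous_map_preimage assms(1) by blast
qed

lemma closed_rcos:
  assumes "closedin T N" "subgroup N G" "a \<in> carrier G"
  shows "closedin T (N #> a)"
proof -
  have "continuous_map T T (\<lambda>x. x \<otimes> inv a)"
    using cmult_fun[OF continuous_map_id[unfolded id_def] cconst[of "inv a"]] assms by simp
  then show ?thesis unfolding rcos_preimage[OF assms(2,3)]
    using closedin_continuous_map_preimage assms(1) by blast
qed

lemma open_subgroup_closed:
  assumes "openin T N" "subgroup N G"
  shows "closedin T N"
proof -
  have "topspace T - N = (\<Union>a\<in>carrier G - N. N #> a)"
  proof
    show "topspace T - N \<subseteq> (\<Union>a\<in>carrier G - N. N #> a)"
    proof
      fix x assume "x \<in> topspace T - N"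
      then have "x \<in> carrier G - N" "x \<in> N #> x" using assms(2) rcos_self by auto
      then show "x \<in> (\<Union>a\<in>carrier G - N. N #> a)" by blast
    qed
    show "(\<Union>a\<in>carrier G - N. N #> a) \<subseteq> topspace T - N"
    proof clarify
      fix a x assume a: "a \<in> carrier G" "a \<notin> N" and x: "x \<in> N #> a"
      then obtain h where h: "h \<in> N" "x = h \<otimes> a" by (auto simp: r_coset_def)
      show "x \<in> topspace T - N"
      proof
        show "x \<in> topspace T" using h a assms(2) by (simp add: subgroup.mem_carrier)
        show "x \<notin> N"
        proof
          assume "x \<in> N"
          then have "inv h \<otimes> x \<in> N" using h assms(2) by (simp add: subgroup.m_closed subgroup.m_inv_closed)
          moreover have "inv h \<otimes> x = a" using h a assms(2)
            by (simp add: m_assoc[symmetric] subgroup.mem_carrier)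
          ultimately show False using a by simp
        qed
      qed
    qed
  qed
  moreover have "openin T (\<Union>a\<in>carrier G - N. N #> a)"
    using assms open_rcos by auto
  ultimately show ?thesis
    using assms(2) by (simp add: closedin_def subgroup.subset)
qed

lemma open_subgroup_finite_index:
  assumes "compact_space T" "openin T N" "subgroup N G"
  shows "finite (rcosets N)"
proof -
  have "compactin T (topspace T)" using assms(1) by (simp add: compact_space_def)
  moreover have "\<forall>u\<in>rcosets N. openin T u"
    using assms open_rcos by (auto simp: RCOSETS_def)
  moreover have "topspace T \<subseteq> \<Union>(rcosets N)"
    using assms(3) rcos_self by (auto simp: RCOSETS_def)
  ultimately obtain F where F: "finite F" "F \<subseteq> rcosets N" "topspace T \<subseteq> \<Union>F"
    unfolding compactin_def by meson
  have "rcosets N \<subseteq> F"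
  proof
    fix R assume "R \<in> rcosets N"
    then obtain b where b: "b \<in> carrier G" "R = N #> b" by (auto simp: RCOSETS_def)
    then obtain C where C: "C \<in> F" "b \<in> C" using F(3) by auto
    then obtain a where a: "a \<in> carrier G" "C = N #> a" using F(2) by (auto simp: RCOSETS_def)
    then have "N #> a = N #> b" using repr_independence C assms(3) by blast
    then show "R \<in> F" using b a C by simp
  qed
  then show ?thesis using F(1) finite_subset by blast
qed

lemma open_subgroup_of_nbhd:
  assumes "subgroup N G" "openin T V" "\<one> \<in> V" "V \<subseteq> N"
  shows "openin T N"
proof -
  have "\<exists>W. openin T W \<and> h \<in> W \<and> W \<subseteq> N" if h: "h \<in> N" for h
  proof -
    have hc: "h \<in> carrier G" using subgroup.mem_carrier[OF assms(1) h] .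
    have ic: "inv h \<in> carrier G" using hc by simp
    have cm: "continuous_map T T (\<lambda>x. inv h \<otimes> x)"
      using cmult_fun[OF cconst[OF ic] continuous_map_id[unfolded id_def]] .
    have o: "openin T {x \<in> topspace T. inv h \<otimes> x \<in> V}"
      using openin_continuous_map_preimage[OF cm assms(2)] .
    have i: "h \<in> {x \<in> topspace T. inv h \<otimes> x \<in> V}" using hc assms(3) by simp
    have s: "{x \<in> topspace T. inv h \<otimes> x \<in> V} \<subseteq> N"
    proof
      fix x assume "x \<in> {x \<in> topspace T. inv h \<otimes> x \<in> V}"
      then have x: "x \<in> carrier G" "inv h \<otimes> x \<in> V" by auto
      have "inv h \<otimes> x \<in> N" using subsetD[OF assms(4) x(2)] .
      then have "h \<otimes> (inv h \<otimes> x) \<in> N" using subgroup.m_closed[OF assms(1) h] by simp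
      then show "x \<in> N" using x hc by simp
    qed
    show ?thesis using o i s by blast
  qed
  then have "\<forall>h\<in>N. \<exists>W. openin T W \<and> h \<in> W \<and> W \<subseteq> N" by blast
  then show ?thesis using openin_subopen[of T N] by blast
qed

end

locale pgrp = tgrp +
  assumes cpt: "compact_space T" and hd: "Hausdorff_space T"
    and tdc: "\<forall>x \<in> topspace T. connected_component_of_set T x = {x}"
begin

lemma clopen_sep:
  assumes "x \<in> carrier G" "x \<noteq> \<one>"
  shows "\<exists>U. closedin T U \<and> openin T U \<and> \<one> \<in> U \<and> x \<notin> U"
proof -
  have q: "quasi_component_of T \<one> = connected_component_of T \<one>"
    by (rule quasi_eq_connected_component_of) (simp add: cpt hd)
  have cc: "connected_component_of_set T \<one> = {\<one>}" using tdc by simp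
  have nc: "\<not> connected_component_of T \<one> x"
  proof
    assume "connected_component_of T \<one> x"
    then have "x \<in> connected_component_of_set T \<one>" by simp
    then show False using cc assms(2) by simp
  qed
  from q nc have "\<not> quasi_component_of T \<one> x" by simp
  then obtain U where U: "closedin T U" "openin T U" "\<not> (\<one> \<in> U \<longleftrightarrow> x \<in> U)"
    using assms unfolding quasi_component_of_def by auto
  show ?thesis
  proof (cases "\<one> \<in> U")
    case True then show ?thesis using U by blast
  next
    case False
    have c1: "closedin T (topspace T - U)" using closedin_diff[OF closedin_topspace U(2)] .
    have c2: "openin T (topspace T - U)" using openin_diff[OF openin_topspace U(1)] .
    have "x \<in> U" using False U(3) by blast
    then have "\<one> \<in> topspace T - U \<and> x \<notin> topspace T - U" using False by simp
    then show ?thesis using c1 c2 by blast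
  qed
qed

definition Fm :: "('a \<times> 'a) \<times> 'a \<Rightarrow> 'a" where
  "Fm z = fst (fst z) \<otimes> snd z \<otimes> inv (fst (fst z)) \<otimes> snd (fst z)"

lemma cFm: "continuous_map (prod_topology (prod_topology T T) T) T Fm"
proof -
  have f1: "continuous_map (prod_topology (prod_topology T T) T) T (\<lambda>z. fst (fst z))"
    using continuous_map_compose[OF continuous_map_fst continuous_map_fst] by (simp add: o_def)
  have f2: "continuous_map (prod_topology (prod_topology T T) T) T (\<lambda>z. snd (fst z))"
    using continuous_map_compose[OF continuous_map_fst continuous_map_snd] by (simp add: o_def)
  have f3: "continuous_map (prod_topology (prod_topology T T) T) T (\<lambda>z. snd z)"
    by (rule continuous_map_snd)
  show ?thesis unfolding Fm_def
    by (rule cmult_fun[OF cmult_fun[OF cmult_fun[OF f1 f3] cinv_fun[OF f1]] f2])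
qed

lemma tube_aux:
  assumes "closedin T U" "openin T U"
  shows "\<exists>V. openin T V \<and> \<one> \<in> V \<and> (\<forall>g\<in>carrier G. \<forall>u\<in>U. \<forall>v\<in>V. Fm ((g,u),v) \<in> U)"
proof -
  let ?W = "{z \<in> topspace (prod_topology (prod_topology T T) T). Fm z \<in> U}"
  have W: "openin (prod_topology (prod_topology T T) T) ?W"
    using openin_continuous_map_preimage[OF cFm assms(2)] .
  have "compactin T U" using closedin_compact_space[OF cpt assms(1)] .
  moreover have "compactin T (carrier G)" using cpt by (simp add: compact_space_def)
  ultimately have C: "compactin (prod_topology T T) (carrier G \<times> U)"
    by (simp add: compactin_Times)
  have U: "U \<subseteq> carrier G" using assms(2) openin_subset by fastforce
  have sub: "(carrier G \<times> U) \<times> {\<one>} \<subseteq> ?W"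
    using U by (auto simp: Fm_def)
  obtain U' V where "openin (prod_topology T T) U'" "openin T V" "carrier G \<times> U \<subseteq> U'" "\<one> \<in> V"
      "U' \<times> V \<subseteq> ?W"
    using tube_lemma_left[OF W C _ sub] by auto
  then show ?thesis by (intro exI[of _ V]) blast
qed

lemma exists_open_normal_sub:
  assumes "closedin T U" "openin T U" "\<one> \<in> U"
  shows "\<exists>N. N \<lhd> G \<and> openin T N \<and> N \<subseteq> U"
proof -
  have U: "U \<subseteq> carrier G" using assms(2) openin_subset by fastforce
  have cU: "closedin T (topspace T - U)" "openin T (topspace T - U)"
    using closedin_diff[OF closedin_topspace assms(2)] openin_diff[OF openin_topspace assms(1)] by auto
  obtain V1 where V1: "openin T V1" "\<one> \<in> V1" "\<forall>g\<in>carrier G. \<forall>u\<in>U. \<forall>v\<in>V1. Fm ((g,u),v) \<in> U"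
    using tube_aux[OF assms(1,2)] by blast
  obtain V2 where V2: "openin T V2" "\<one> \<in> V2"
    "\<forall>g\<in>carrier G. \<forall>u\<in>topspace T - U. \<forall>v\<in>V2. Fm ((g,u),v) \<in> topspace T - U"
    using tube_aux[OF cU] by blast
  define N where "N = {h \<in> carrier G. \<forall>g\<in>carrier G. \<forall>u\<in>carrier G. (g \<otimes> h \<otimes> inv g \<otimes> u \<in> U \<longleftrightarrow> u \<in> U)}"
  have NU: "N \<subseteq> U"
  proof
    fix h assume "h \<in> N"
    then have hc: "h \<in> carrier G" and hh: "\<forall>g\<in>carrier G. \<forall>u\<in>carrier G. (g \<otimes> h \<otimes> inv g \<otimes> u \<in> U \<longleftrightarrow> u \<in> U)"
      unfolding N_def by auto
    then have "\<one> \<otimes> h \<otimes> inv \<one> \<otimes> \<one> \<in> U \<longleftrightarrow> \<one> \<in> U" by blast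
    then show "h \<in> U" using assms(3) hc by simp
  qed
  have conj: "g \<otimes> (x \<otimes> h \<otimes> inv x) \<otimes> inv g = (g \<otimes> x) \<otimes> h \<otimes> inv (g \<otimes> x)"
    if "g \<in> carrier G" "x \<in> carrier G" "h \<in> carrier G" for g x h
    using that by (simp add: m_assoc inv_mult_group)
  have sg: "subgroup N G"
  proof (rule subgroupI)
    show "N \<subseteq> carrier G" unfolding N_def by auto
    show "N \<noteq> {}"
    proof -
      have "\<one> \<in> N" unfolding N_def by (auto simp: m_assoc)
      then show ?thesis by blast
    qed
  next
    fix h assume h: "h \<in> N"
    then have hc: "h \<in> carrier G" unfolding N_def by auto
    show "inv h \<in> N" unfolding N_def
    proof (intro CollectI conjI ballI)
      show "inv h \<in> carrier G" using hc by simp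
      fix g u assume g: "g \<in> carrier G" and u: "u \<in> carrier G"
      let ?u' = "g \<otimes> inv h \<otimes> inv g \<otimes> u"
      have "?u' \<in> carrier G" using g u hc by simp
      then have "g \<otimes> h \<otimes> inv g \<otimes> ?u' \<in> U \<longleftrightarrow> ?u' \<in> U" using h g unfolding N_def by auto
      moreover have "g \<otimes> h \<otimes> inv g \<otimes> ?u' = u" using g u hc
        by (simp add: m_assoc[symmetric]) (simp add: m_assoc)
      ultimately show "?u' \<in> U \<longleftrightarrow> u \<in> U" by simp
    qed
  next
    fix h k assume h: "h \<in> N" and k: "k \<in> N"
    then have hc: "h \<in> carrier G" and kc: "k \<in> carrier G" unfolding N_def by auto
    show "h \<otimes> k \<in> N" unfolding N_def
    proof (intro CollectI conjI ballI)
      show "h \<otimes> k \<in> carrier G" using hc kc by simp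
      fix g u assume g: "g \<in> carrier G" and u: "u \<in> carrier G"
      let ?u' = "g \<otimes> k \<otimes> inv g \<otimes> u"
      have u': "?u' \<in> carrier G" using g u kc by simp
      have "g \<otimes> h \<otimes> inv g \<otimes> ?u' \<in> U \<longleftrightarrow> ?u' \<in> U" using h g u' unfolding N_def by auto
      moreover have "?u' \<in> U \<longleftrightarrow> u \<in> U" using k g u unfolding N_def by auto
      moreover have "g \<otimes> h \<otimes> inv g \<otimes> ?u' = g \<otimes> (h \<otimes> k) \<otimes> inv g \<otimes> u" using g u hc kc
        by (simp add: m_assoc)
      ultimately show "g \<otimes> (h \<otimes> k) \<otimes> inv g \<otimes> u \<in> U \<longleftrightarrow> u \<in> U" by simp
    qed
  qed
  have nm: "N \<lhd> G"
  proof (rule normal_invI[OF sg])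
    fix x h assume x: "x \<in> carrier G" and h: "h \<in> N"
    then have hc: "h \<in> carrier G" unfolding N_def by auto
    show "x \<otimes> h \<otimes> inv x \<in> N" unfolding N_def
    proof (intro CollectI conjI ballI)
      show "x \<otimes> h \<otimes> inv x \<in> carrier G" using x hc by simp
      fix g u assume g: "g \<in> carrier G" and u: "u \<in> carrier G"
      have "(g \<otimes> x) \<otimes> h \<otimes> inv (g \<otimes> x) \<otimes> u \<in> U \<longleftrightarrow> u \<in> U"
        using h g x u unfolding N_def by auto
      then show "g \<otimes> (x \<otimes> h \<otimes> inv x) \<otimes> inv g \<otimes> u \<in> U \<longleftrightarrow> u \<in> U"
        using conj[OF g x hc] by simp
    qed
  qed
  have VN: "V1 \<inter> V2 \<subseteq> N"
  proof
    fix v assume v: "v \<in> V1 \<inter> V2"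
    then have vc: "v \<in> carrier G" using V1(1) openin_subset by fastforce
    show "v \<in> N" unfolding N_def
    proof (intro CollectI conjI ballI)
      show "v \<in> carrier G" by (rule vc)
      fix g u assume g: "g \<in> carrier G" and u: "u \<in> carrier G"
      show "g \<otimes> v \<otimes> inv g \<otimes> u \<in> U \<longleftrightarrow> u \<in> U"
      proof
        assume "g \<otimes> v \<otimes> inv g \<otimes> u \<in> U"
        then show "u \<in> U" using V2(3) g u v by (force simp: Fm_def)
      next
        assume "u \<in> U"
        then show "g \<otimes> v \<otimes> inv g \<otimes> u \<in> U" using V1(3) g v by (force simp: Fm_def)
      qed
    qed
  qed
  have "openin T N"
    using open_subgroup_of_nbhd[OF sg _ _ VN] V1 V2 by auto
  then show ?thesis using nm NU by blast
qed

lemma exists_open_normal: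
  assumes "x \<in> carrier G" "x \<noteq> \<one>"
  shows "\<exists>N. N \<lhd> G \<and> openin T N \<and> x \<notin> N"
  using clopen_sep[OF assms] exists_open_normal_sub by blast

end

context tgrp
begin

lemma pow_index_in_normal:
  assumes "N \<lhd> G" "finite (carrier (G Mod N))" "x \<in> carrier G"
  shows "x [^] card (carrier (G Mod N)) \<in> N"
proof -
  interpret N: normal N G by (rule assms(1))
  have grp: "group (G Mod N)" by (rule N.factorgroup_is_group)
  have xc: "N #> x \<in> carrier (G Mod N)"
    using assms(3) by (auto simp: FactGroup_def RCOSETS_def)
  have "(N #> x) [^]\<^bsub>G Mod N\<^esub> Coset.order (G Mod N) = \<one>\<^bsub>G Mod N\<^esub>"
    using group.pow_order_eq_1[OF grp xc] .
  moreover have "(N #> x) [^]\<^bsub>G Mod N\<^esub> (n::nat) = N #> (x [^] n)" for n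
    using hom_nat_pow[OF N.r_coset_hom_Mod assms(3) is_group grp] by simp
  ultimately have "N #> (x [^] card (carrier (G Mod N))) = N"
    by (simp add: Coset.order_def)
  then show ?thesis
    using coset_join1 assms(3) N.subgroup_axioms by blast
qed

lemma finite_normal_Inter:
  assumes "finite \<N>" "\<forall>N\<in>\<N>. N \<lhd> G \<and> openin T N"
  shows "\<exists>N0. N0 \<lhd> G \<and> openin T N0 \<and> N0 \<subseteq> \<Inter>\<N>"
  using assms
proof (induction \<N> rule: finite_induct)
  case empty
  then show ?case using normal_self by (intro exI[of _ "carrier G"]) (auto simp: openin_topspace[of T, simplified])
next
  case (insert N \<N>)
  then obtain N0 where N0: "N0 \<lhd> G" "openin T N0" "N0 \<subseteq> \<Inter>\<N>" by blast
  have NN: "N \<lhd> G" "openin T N" using insert.prems by blast+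
  have "N0 \<inter> N \<lhd> G" using normal_subgroup_intersect[OF N0(1) NN(1)] .
  moreover have "openin T (N0 \<inter> N)" using openin_Int[OF N0(2) NN(2)] .
  moreover have "N0 \<inter> N \<subseteq> \<Inter>(insert N \<N>)" using N0(3) by blast
  ultimately show ?case by blast
qed

end

context pgrp
begin

lemma root_exists:
  assumes pq: "\<forall>N. N \<lhd> G \<and> openin T N \<longrightarrow> finite (carrier (G Mod N)) \<and> (\<exists>k. card (carrier (G Mod N)) = p ^ k)"
    and p: "Factorial_Ring.prime p" and x: "x \<in> carrier G" and n: "coprime n p"
  shows "\<exists>y\<in>carrier G. y [^] n = x"
proof -
  define A where "A N = {y \<in> topspace T. y [^] n \<otimes> inv x \<in> N}" for N
  let ?\<N> = "{N. N \<lhd> G \<and> openin T N}"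
  have cf: "continuous_map T T (\<lambda>y. y [^] n \<otimes> inv x)"
    using cmult_fun[OF cpow cconst[of "inv x"]] x by simp
  have clo: "closedin T (A N)" if "N \<in> ?\<N>" for N
  proof -
    have "closedin T N" using that open_subgroup_closed normal_imp_subgroup by blast
    then show ?thesis unfolding A_def using closedin_continuous_map_preimage[OF cf] by blast
  qed
  have n0: "n \<noteq> 0" using n p by (metis coprime_0_left_iff not_prime_unit)
  have ne: "A N \<noteq> {}" if "N \<in> ?\<N>" for N
  proof -
    have Nn: "N \<lhd> G" "openin T N" using that by auto
    obtain k where fin: "finite (carrier (G Mod N))" and ck: "card (carrier (G Mod N)) = p ^ k"
      using pq Nn by blast
    have "coprime n (p ^ k)" using n by simp
    then obtain m j where mj: "n * m = p ^ k * j + 1"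
      using bezout_nat[OF n0, of "p^k"] by auto
    have xk: "x [^] (p ^ k) \<in> N" using pow_index_in_normal[OF Nn(1) fin x] ck by simp
    have "(x [^] m) [^] n = (x [^] (p ^ k)) [^] j \<otimes> x"
      using x by (simp add: nat_pow_pow nat_pow_mult mult.commute[of m n] mj)
    then have "(x [^] m) [^] n \<otimes> inv x = (x [^] (p ^ k)) [^] j"
      using x by (simp add: m_assoc)
    then have "x [^] m \<in> A N"
      unfolding A_def using x xk subgroup_pow_closed[OF normal_imp_subgroup[OF Nn(1)]] by auto
    then show ?thesis by blast
  qed
  have fip: "\<forall>\<U>. (\<forall>C\<in>\<U>. closedin T C) \<and> (\<forall>\<F>. finite \<F> \<and> \<F> \<subseteq> \<U> \<longrightarrow> \<Inter>\<F> \<noteq> {}) \<longrightarrow> \<Inter>\<U> \<noteq> {}"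
    using cpt by (simp only: compact_space_fip)
  have c1: "\<forall>C\<in>A ` ?\<N>. closedin T C" using clo by blast
  have c2: "\<forall>\<F>. finite \<F> \<and> \<F> \<subseteq> A ` ?\<N> \<longrightarrow> \<Inter>\<F> \<noteq> {}"
  proof (intro allI impI)
    fix \<F> assume F: "finite \<F> \<and> \<F> \<subseteq> A ` ?\<N>"
    then obtain \<N>' where N': "\<N>' \<subseteq> ?\<N>" "finite \<N>'" "\<F> = A ` \<N>'"
      by (meson finite_subset_image)
    then obtain N0 where N0: "N0 \<lhd> G" "openin T N0" "N0 \<subseteq> \<Inter>\<N>'"
      using finite_normal_Inter[of \<N>'] by blast
    have "A N0 \<subseteq> \<Inter>\<F>" using N0(3) N'(3) unfolding A_def by auto
    moreover have "A N0 \<noteq> {}" using ne N0 by blast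
    ultimately show "\<Inter>\<F> \<noteq> {}" by blast
  qed
  have "\<Inter>(A ` ?\<N>) \<noteq> {}" using fip c1 c2 by blast
  then obtain y where y: "\<And>N. N \<in> ?\<N> \<Longrightarrow> y \<in> A N" by blast
  have "carrier G \<in> ?\<N>" using normal_self openin_topspace[of T] by simp
  then have yc: "y \<in> carrier G" using y unfolding A_def by auto
  have "y [^] n \<otimes> inv x = \<one>"
  proof (rule ccontr)
    assume ne1: "y [^] n \<otimes> inv x \<noteq> \<one>"
    have "y [^] n \<otimes> inv x \<in> carrier G" using yc x by simp
    then obtain N where "N \<lhd> G" "openin T N" "y [^] n \<otimes> inv x \<notin> N"
      using exists_open_normal[OF _ ne1] by blast
    then show False using y[of N] unfolding A_def by auto
  qed
  then have "y [^] n = x"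
    using yc x by (metis inv_equality inv_inv nat_pow_closed inv_closed)
  then show ?thesis using yc by blast
qed

end




lemma profinite_pgrp: "profinite_group G T \<Longrightarrow> pgrp G T"
  unfolding profinite_group_def pgrp_def pgrp_axioms_def tgrp_def tgrp_axioms_def topological_group_def
  by auto

context group
begin

lemma p_group_order:
  assumes fin: "finite (carrier G)" and p: "Factorial_Ring.prime p"
    and all: "\<forall>x\<in>carrier G. x [^] (p ^ a) = \<one>"
  shows "\<exists>k. Coset.order G = p ^ k"
proof -
  have o0: "Coset.order G \<noteq> 0" using fin by (simp add: order_gt_0_iff_finite[symmetric])
  have qp: "q = p" if q: "Factorial_Ring.prime q" "q dvd Coset.order G" for q
  proof (rule ccontr)
    assume qp: "q \<noteq> p"
    have nu: "\<not> is_unit q" using q(1) not_prime_unit by blast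
    obtain r where r: "Coset.order G = q ^ multiplicity q (Coset.order G) * r" "\<not> q dvd r"
      by (rule multiplicity_decompose'[OF o0 nu])
    have b: "multiplicity q (Coset.order G) \<ge> 1"
      using q o0 by (simp add: prime_multiplicity_gt_zero_iff Suc_le_eq)
    obtain H where H: "subgroup H G" "card H = q ^ multiplicity q (Coset.order G)"
      using sylow_thm[OF q(1) is_group r(1) fin] by blast
    have q1: "1 \<le> q" using prime_gt_0_nat[OF q(1)] by simp
    have "q ^ 1 \<le> q ^ multiplicity q (Coset.order G)" by (rule power_increasing[OF b q1])
    then have "card H \<ge> 2" using H(2) prime_ge_2_nat[OF q(1)] by simp
    have "\<not> H \<subseteq> {\<one>}"
    proof
      assume "H \<subseteq> {\<one>}"
      then have "card H \<le> card {\<one>}" by (rule card_mono[rotated]) simp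
      then show False using \<open>card H \<ge> 2\<close> by simp
    qed
    then obtain h where h: "h \<in> H" "h \<noteq> \<one>" by blast
    have hc: "h \<in> carrier G" using subgroup.mem_carrier[OF H(1) h(1)] .
    have finH: "finite H" using finite_subset[OF subgroup.subset[OF H(1)] fin] .
    have gH: "group (G\<lparr>carrier := H\<rparr>)" using subgroup.subgroup_is_group[OF H(1) is_group] .
    have "h [^]\<^bsub>G\<lparr>carrier := H\<rparr>\<^esub> Coset.order (G\<lparr>carrier := H\<rparr>) = \<one>\<^bsub>G\<lparr>carrier := H\<rparr>\<^esub>"
      using group.pow_order_eq_1[OF gH] h by simp
    then have "h [^] (q ^ multiplicity q (Coset.order G)) = \<one>"
      using H(2) by (simp add: Coset.order_def nat_pow_consistent[symmetric])
    then have d1: "ord h dvd q ^ multiplicity q (Coset.order G)" using pow_eq_id[OF hc] by simp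
    have "h [^] (p ^ a) = \<one>" using all hc by blast
    then have d2: "ord h dvd p ^ a" using pow_eq_id[OF hc] by simp
    have "coprime (q ^ multiplicity q (Coset.order G)) (p ^ a)"
      using q(1) p qp by (simp add: primes_coprime)
    then have "ord h = 1" using coprime_common_divisor_nat[OF _ d1 d2] by blast
    then show False using h hc ord_eq_1 by blast
  qed
  have nu: "\<not> is_unit p" using p not_prime_unit by blast
  obtain r where r: "Coset.order G = p ^ multiplicity p (Coset.order G) * r" "\<not> p dvd r"
    by (rule multiplicity_decompose'[OF o0 nu])
  have "r = 1"
  proof (rule ccontr)
    assume "r \<noteq> 1"
    then obtain q :: nat where q: "Factorial_Ring.prime q" "q dvd r" using prime_factor_nat by blast
    have "q dvd p ^ multiplicity p (Coset.order G) * r" using q(2) by (rule dvd_mult)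
    then have "q dvd Coset.order G" using r(1) by simp
    then have "q = p" using qp q(1) by blast
    then show False using q(2) r(2) by simp
  qed
  then show ?thesis using r(1) by auto
qed

end

context tgrp
begin

lemma closure_subgroup:
  assumes S: "subgroup S G"
  shows "subgroup (T closure_of S) G"
proof -
  have Sc: "S \<subseteq> topspace T" using subgroup.subset[OF S] by simp
  let ?f = "\<lambda>z. fst z \<otimes> inv (snd z)"
  have cf: "continuous_map (prod_topology T T) T ?f"
    by (rule cmult_fun[OF continuous_map_fst cinv_fun[OF continuous_map_snd]])
  have img: "?f ` (S \<times> S) \<subseteq> S"
  proof
    fix z assume "z \<in> ?f ` (S \<times> S)"
    then obtain a b where ab: "a \<in> S" "b \<in> S" "z = a \<otimes> inv b" by auto
    have "inv b \<in> S" using subgroup.m_inv_closed[OF S ab(2)] .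
    then show "z \<in> S" using subgroup.m_closed[OF S ab(1)] ab(3) by simp
  qed
  have key: "a \<otimes> inv b \<in> T closure_of S" if "a \<in> T closure_of S" "b \<in> T closure_of S" for a b
  proof -
    have "(a, b) \<in> prod_topology T T closure_of (S \<times> S)" using that by (simp add: closure_of_Times)
    then have "?f (a, b) \<in> T closure_of (?f ` (S \<times> S))"
      using continuous_map_image_closure_subset[OF cf] by blast
    then show ?thesis using closure_of_mono[OF img] by auto
  qed
  have sub: "T closure_of S \<subseteq> carrier G" using closure_of_subset_topspace[of T S] by simp
  have one: "\<one> \<in> T closure_of S" using subsetD[OF closure_of_subset[OF Sc] subgroup.one_closed[OF S]] .
  have inv: "inv b \<in> T closure_of S" if "b \<in> T closure_of S" for b
    using key[OF one that] that sub by auto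
  show ?thesis
  proof (rule subgroupI[OF sub])
    show "T closure_of S \<noteq> {}" using one by blast
    show "inv a \<in> T closure_of S" if "a \<in> T closure_of S" for a using inv that .
    show "a \<otimes> b \<in> T closure_of S" if "a \<in> T closure_of S" "b \<in> T closure_of S" for a b
      using key[OF that(1) inv[OF that(2)]] that sub by auto
  qed
qed

end

context pgrp
begin

lemma closed_subgroup_profinite:
  assumes C: "subgroup C G" "closedin T C"
  shows "profinite_group (G\<lparr>carrier := C\<rparr>) (subtopology T C)"
proof -
  have Cs: "C \<subseteq> topspace T" using subgroup.subset[OF C(1)] by simp
  have top': "topspace (subtopology T C) = C" using Cs by auto
  have m1: "continuous_map (prod_topology (subtopology T C) (subtopology T C)) T (\<lambda>(x, y). x \<otimes>\<^bsub>G\<lparr>carrier := C\<rparr>\<^esub> y)"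
    using continuous_map_from_subtopology[OF cmult, of "C \<times> C"] by (simp add: subtopology_Times)
  have m2: "(\<lambda>(x, y). x \<otimes>\<^bsub>G\<lparr>carrier := C\<rparr>\<^esub> y) ` topspace (prod_topology (subtopology T C) (subtopology T C)) \<subseteq> C"
  proof
    fix z assume "z \<in> (\<lambda>(x, y). x \<otimes>\<^bsub>G\<lparr>carrier := C\<rparr>\<^esub> y) ` topspace (prod_topology (subtopology T C) (subtopology T C))"
    then obtain a b where ab: "a \<in> C" "b \<in> C" "z = a \<otimes> b" using top' by auto
    then show "z \<in> C" using subgroup.m_closed[OF C(1) ab(1) ab(2)] by simp
  qed
  have m: "continuous_map (prod_topology (subtopology T C) (subtopology T C)) (subtopology T C)
      (\<lambda>(x, y). x \<otimes>\<^bsub>G\<lparr>carrier := C\<rparr>\<^esub> y)"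
    unfolding continuous_map_in_subtopology using m1 m2 by blast
  have i1: "continuous_map (subtopology T C) T (\<lambda>x. inv x)"
    using continuous_map_from_subtopology[OF cinv] .
  have i2: "(\<lambda>x. inv x) ` topspace (subtopology T C) \<subseteq> C"
  proof
    fix z assume "z \<in> (\<lambda>x. inv x) ` topspace (subtopology T C)"
    then obtain a where a: "a \<in> C" "z = inv a" using top' by auto
    then show "z \<in> C" using subgroup.m_inv_closed[OF C(1) a(1)] by simp
  qed
  have i: "continuous_map (subtopology T C) (subtopology T C) (\<lambda>x. inv\<^bsub>G\<lparr>carrier := C\<rparr>\<^esub> x)"
  proof (rule continuous_map_eq)
    show "continuous_map (subtopology T C) (subtopology T C) (\<lambda>x. inv x)"
      unfolding continuous_map_in_subtopology using i1 i2 by blast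
    show "inv x = inv\<^bsub>G\<lparr>carrier := C\<rparr>\<^esub> x" if "x \<in> topspace (subtopology T C)" for x
      using that top' m_inv_consistent[OF C(1)] by simp
  qed
  have tg': "topological_group (G\<lparr>carrier := C\<rparr>) (subtopology T C)"
    unfolding topological_group_def using subgroup.subgroup_is_group[OF C(1) is_group] top' m i by simp
  have "compact_space (subtopology T C)"
    using compact_space_subtopology closedin_compact_space[OF cpt C(2)] by blast
  moreover have "Hausdorff_space (subtopology T C)" using hd Hausdorff_space_subtopology by blast
  moreover have "connected_component_of_set (subtopology T C) x = {x}" if "x \<in> topspace (subtopology T C)" for x
  proof -
    have "connected_component_of (subtopology T C) x y \<Longrightarrow> connected_component_of T x y" for y
      using connected_component_of_mono[of T C x y "topspace T"] Cs subtopology_topspace[of T] by simp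
    then have "connected_component_of_set (subtopology T C) x \<subseteq> {x}"
      using tdc that top' Cs by blast
    moreover have "x \<in> connected_component_of_set (subtopology T C) x"
      using connected_component_of_refl[of "subtopology T C" x] that by simp
    ultimately show ?thesis by blast
  qed
  ultimately show ?thesis using tg' unfolding profinite_group_def by blast
qed

end

context pgrp
begin

lemma closure_pro_p:
  assumes S: "subgroup S G" and p: "Factorial_Ring.prime p"
    and dv: "\<forall>x\<in>S. \<forall>n. coprime n p \<longrightarrow> (\<exists>y\<in>S. y [^] n = x)"
  shows "closed_pro_p_subgroup p G T (T closure_of S)"
proof -
  define C where "C = T closure_of S"
  have C: "subgroup C G" unfolding C_def by (rule closure_subgroup[OF S])
  have Cc: "closedin T C" unfolding C_def by simp
  have SC: "S \<subseteq> C" unfolding C_def using closure_of_subset[of S T] subgroup.subset[OF S] by simp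
  define K where "K = G\<lparr>carrier := C\<rparr>"
  define TK where "TK = subtopology T C"
  have pK: "profinite_group K TK" unfolding K_def TK_def using closed_subgroup_profinite[OF C Cc] .
  interpret K: pgrp K TK using profinite_pgrp[OF pK] .
  have cK [simp]: "carrier K = C" unfolding K_def by simp
  have powK: "y [^]\<^bsub>K\<^esub> (n::nat) = y [^] n" for y n unfolding K_def using nat_pow_consistent by simp
  have nu: "\<not> is_unit p" using p not_prime_unit by blast
  have quot: "finite (carrier (K Mod M)) \<and> (\<exists>k. card (carrier (K Mod M)) = p ^ k)"
    if M: "M \<lhd> K" "openin TK M" for M
  proof -
    interpret M: normal M K using M(1) .
    define F where "F = K Mod M"
    have grpF: "group F" unfolding F_def by (rule M.factorgroup_is_group)
    have fin: "finite (carrier F)"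
      using K.open_subgroup_finite_index[OF K.cpt M(2) M.subgroup_axioms] by (simp add: F_def FactGroup_def)
    have "0 < card (carrier F)"
      using monoid.order_gt_0_iff_finite[OF group.is_monoid[OF grpF]] fin unfolding Coset.order_def by blast
    then have m0: "card (carrier F) \<noteq> 0" by linarith
    obtain r where r: "card (carrier F) = p ^ multiplicity p (card (carrier F)) * r" "\<not> p dvd r"
      by (rule multiplicity_decompose'[OF m0 nu])
    have cop: "coprime r p" using prime_imp_coprime[OF p r(2)] by (simp add: coprime_commute)
    have hom: "(\<lambda>a. M #>\<^bsub>K\<^esub> a) \<in> hom K F" unfolding F_def by (rule M.r_coset_hom_Mod)
    have all: "\<forall>f\<in>carrier F. f [^]\<^bsub>F\<^esub> (p ^ multiplicity p (card (carrier F))) = \<one>\<^bsub>F\<^esub>"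
    proof
      fix f assume f: "f \<in> carrier F"
      then obtain c where c: "c \<in> C" "f = M #>\<^bsub>K\<^esub> c" by (auto simp: F_def FactGroup_def RCOSETS_def)
      have "openin TK (M #>\<^bsub>K\<^esub> c)" using K.open_rcos[OF M(2) M.subgroup_axioms] c(1) by simp
      then obtain Ou where Ou: "openin T Ou" "M #>\<^bsub>K\<^esub> c = Ou \<inter> C"
        unfolding TK_def openin_subtopology by blast
      have cM: "c \<in> M #>\<^bsub>K\<^esub> c" using K.rcos_self[OF _ M.subgroup_axioms] c(1) by simp
      then have cO: "c \<in> Ou" using Ou by auto
      have "c \<in> T closure_of S" using c(1) C_def by simp
      then obtain s where s: "s \<in> S" "s \<in> Ou" using Ou(1) cO unfolding in_closure_of by blast
      have sM: "s \<in> M #>\<^bsub>K\<^esub> c" using Ou s SC by auto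
      have fs: "f = M #>\<^bsub>K\<^esub> s" using K.repr_independence[OF sM _ M.subgroup_axioms] c by simp
      obtain y where y: "y \<in> S" "y [^] r = s" using dv s(1) cop by blast
      have yC: "y \<in> carrier K" using y SC by auto
      have e1: "(M #>\<^bsub>K\<^esub> y) [^]\<^bsub>F\<^esub> r = M #>\<^bsub>K\<^esub> (y [^]\<^bsub>K\<^esub> r)"
        using hom_nat_pow[OF hom yC K.is_group grpF, of r] by simp
      have "f = (M #>\<^bsub>K\<^esub> y) [^]\<^bsub>F\<^esub> r" using e1 fs y(2) powK by simp
      moreover have yF: "M #>\<^bsub>K\<^esub> y \<in> carrier F" using hom yC by (auto simp: hom_def)
      ultimately have "f [^]\<^bsub>F\<^esub> (p ^ multiplicity p (card (carrier F)))
          = (M #>\<^bsub>K\<^esub> y) [^]\<^bsub>F\<^esub> (card (carrier F))"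
        using monoid.nat_pow_pow[OF group.is_monoid[OF grpF] yF] r(1) by (simp add: mult.commute)
      also have "\<dots> = \<one>\<^bsub>F\<^esub>" using group.pow_order_eq_1[OF grpF yF] by (simp add: Coset.order_def)
      finally show "f [^]\<^bsub>F\<^esub> (p ^ multiplicity p (card (carrier F))) = \<one>\<^bsub>F\<^esub>" .
    qed
    obtain k where "Coset.order F = p ^ k" using group.p_group_order[OF grpF fin p all] by blast
    then show ?thesis using fin by (auto simp: F_def Coset.order_def)
  qed
  show ?thesis
    unfolding closed_pro_p_subgroup_def pro_p_group_def
    using C Cc pK quot unfolding C_def K_def TK_def by blast
qed

lemma cpp_roots:
  assumes Q: "closed_pro_p_subgroup p G T Q" and p: "Factorial_Ring.prime p"
    and x: "x \<in> Q" and n: "coprime n p"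
  shows "\<exists>y\<in>Q. y [^] n = x"
proof -
  have pf: "profinite_group (G\<lparr>carrier := Q\<rparr>) (subtopology T Q)"
    and pq: "\<forall>N. N \<lhd> G\<lparr>carrier := Q\<rparr> \<and> openin (subtopology T Q) N \<longrightarrow>
        finite (carrier (G\<lparr>carrier := Q\<rparr> Mod N)) \<and> (\<exists>k. card (carrier (G\<lparr>carrier := Q\<rparr> Mod N)) = p ^ k)"
    using Q unfolding closed_pro_p_subgroup_def pro_p_group_def by blast+
  interpret K: pgrp "G\<lparr>carrier := Q\<rparr>" "subtopology T Q" using profinite_pgrp[OF pf] .
  obtain y where y: "y \<in> carrier (G\<lparr>carrier := Q\<rparr>)" "y [^]\<^bsub>G\<lparr>carrier := Q\<rparr>\<^esub> n = x"
    using K.root_exists[OF pq p _ n] x by auto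
  then show ?thesis using nat_pow_consistent[of y n Q] by auto
qed

end

theorem mainTheorem14:
  fixes G :: "('a, 'c) monoid_scheme" and TG :: "'a topology"
    and H :: "('b, 'd) monoid_scheme" and TH :: "'b topology"
    and \<phi> :: "'a \<Rightarrow> 'b" and p :: nat and P :: "'a set"
  assumes "profinite_group G TG" and "profinite_group H TH"
    and "\<phi> \<in> iso G H"
    and "Factorial_Ring.prime p"
    and "sylow_subgroup p G TG P"
  shows "sylow_subgroup p H TH (\<phi> ` P)"
proof -
  interpret GG: pgrp G TG using profinite_pgrp[OF assms(1)] .
  interpret HH: pgrp H TH using profinite_pgrp[OF assms(2)] .
  have p: "Factorial_Ring.prime p" by (rule assms(4))
  have hom: "\<phi> \<in> hom G H" and bij: "bij_betw \<phi> (carrier G) (carrier H)"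
    using assms(3) by (auto simp: iso_def)
  interpret gh: group_hom G H \<phi>
    using hom by (simp add: group_hom_def group_hom_axioms_def GG.is_group HH.is_group)
  have inj: "inj_on \<phi> (carrier G)" and surj: "\<phi> ` carrier G = carrier H"
    using bij by (auto simp: bij_betw_def)
  have cP: "closed_pro_p_subgroup p G TG P"
    and mx: "\<And>Q. closed_pro_p_subgroup p G TG Q \<Longrightarrow> P \<subseteq> Q \<Longrightarrow> Q = P"
    using assms(5) unfolding sylow_subgroup_def by blast+
  have sP: "subgroup P G" using cP unfolding closed_pro_p_subgroup_def by blast
  have Pc: "P \<subseteq> carrier G" using subgroup.subset[OF sP] .
  have divP: "\<exists>y\<in>P. y [^]\<^bsub>G\<^esub> n = x" if "x \<in> P" "coprime n p" for x n
    using GG.cpp_roots[OF cP p that] .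
  have sphi: "subgroup (\<phi> ` P) H" using gh.subgroup_img_is_subgroup[OF sP] .
  have divphi: "\<forall>x\<in>\<phi> ` P. \<forall>n. coprime n p \<longrightarrow> (\<exists>y\<in>\<phi> ` P. y [^]\<^bsub>H\<^esub> n = x)"
  proof (intro ballI allI impI)
    fix x n assume x: "x \<in> \<phi> ` P" and n: "coprime n p"
    then obtain a where a: "a \<in> P" "x = \<phi> a" by blast
    then obtain b where b: "b \<in> P" "b [^]\<^bsub>G\<^esub> n = a" using divP n by blast
    have "\<phi> b [^]\<^bsub>H\<^esub> n = x" using gh.hom_nat_pow[of b n] b a Pc by auto
    then show "\<exists>y\<in>\<phi> ` P. y [^]\<^bsub>H\<^esub> n = x" using b(1) by blast
  qed
  have key: "Q \<subseteq> \<phi> ` P" if Q: "closed_pro_p_subgroup p H TH Q" "\<phi> ` P \<subseteq> Q" for Q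
  proof -
    have sQ: "subgroup Q H" using Q(1) unfolding closed_pro_p_subgroup_def by blast
    define R where "R = {x \<in> carrier G. \<phi> x \<in> Q}"
    have sR: "subgroup R G"
    proof (rule GG.subgroupI)
      show "R \<subseteq> carrier G" unfolding R_def by blast
      show "R \<noteq> {}" using subgroup.one_closed[OF sQ] unfolding R_def by force
      show "inv\<^bsub>G\<^esub> a \<in> R" if "a \<in> R" for a
        using that subgroup.m_inv_closed[OF sQ] unfolding R_def by simp
      show "a \<otimes>\<^bsub>G\<^esub> b \<in> R" if "a \<in> R" "b \<in> R" for a b
        using that subgroup.m_closed[OF sQ] unfolding R_def by simp
    qed
    have PR: "P \<subseteq> R" using Q(2) Pc unfolding R_def by blast
    have divR: "\<forall>x\<in>R. \<forall>n. coprime n p \<longrightarrow> (\<exists>y\<in>R. y [^]\<^bsub>G\<^esub> n = x)"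
    proof (intro ballI allI impI)
      fix x n assume x: "x \<in> R" and n: "coprime n p"
      then have xc: "x \<in> carrier G" and xQ: "\<phi> x \<in> Q" unfolding R_def by auto
      obtain z where z: "z \<in> Q" "z [^]\<^bsub>H\<^esub> n = \<phi> x" using HH.cpp_roots[OF Q(1) p xQ n] by blast
      have "z \<in> carrier H" using subgroup.mem_carrier[OF sQ z(1)] .
      then obtain y where y: "y \<in> carrier G" "z = \<phi> y" using surj by blast
      have yR: "y \<in> R" using y z(1) unfolding R_def by simp
      have "\<phi> (y [^]\<^bsub>G\<^esub> n) = \<phi> x" using gh.hom_nat_pow[OF y(1)] y z by simp
      then have "y [^]\<^bsub>G\<^esub> n = x" using inj y(1) xc by (simp add: inj_on_def)
      then show "\<exists>y\<in>R. y [^]\<^bsub>G\<^esub> n = x" using yR by blast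
    qed
    have cR: "closed_pro_p_subgroup p G TG (TG closure_of R)"
      by (rule GG.closure_pro_p[OF sR p divR])
    have "R \<subseteq> TG closure_of R" using closure_of_subset[of R TG] unfolding R_def by auto
    then have "P \<subseteq> TG closure_of R" using PR by blast
    then have "TG closure_of R = P" using mx[OF cR] by blast
    then have RP: "R \<subseteq> P" using \<open>R \<subseteq> TG closure_of R\<close> by blast
    show "Q \<subseteq> \<phi> ` P"
    proof
      fix q assume q: "q \<in> Q"
      then have "q \<in> carrier H" using subgroup.mem_carrier[OF sQ] by simp
      then obtain y where y: "y \<in> carrier G" "q = \<phi> y" using surj by blast
      then have "y \<in> R" using q unfolding R_def by simp
      then show "q \<in> \<phi> ` P" using RP y by blast
    qed
  qed
  have cC: "closed_pro_p_subgroup p H TH (TH closure_of (\<phi> ` P))"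
    by (rule HH.closure_pro_p[OF sphi p divphi])
  have "\<phi> ` P \<subseteq> TH closure_of (\<phi> ` P)"
    using closure_of_subset[of "\<phi> ` P" TH] subgroup.subset[OF sphi] by simp
  then have eq: "TH closure_of (\<phi> ` P) = \<phi> ` P" using key[OF cC] by blast
  have c1: "closed_pro_p_subgroup p H TH (\<phi> ` P)" using cC eq by simp
  show ?thesis unfolding sylow_subgroup_def using c1 key by blast
qed


end
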